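(* There is a constant $C>0$ such that for any distinct integers $n_1,n_2$ there exists an integer $n_3$ with $n_3\bmod\tau\in(n_1\bmod\tau,\,n_2\bmod\tau)$ and $|n_3|<C\max(|n_1|,|n_2|)$.
   Context: $\tau=\frac{1+\sqrt5}{2}$. For real $x$, $x\bmod\tau$ is its image in $\mathbb{R}/\tau\mathbb{Z}$; for $a,b$ in this circle, $(a,b)$ is the open arc from $a$ to $b$ in the positive direction. The constant $C$ is independent of all variables. *)

theory Defs
  imports Complex_Main
begin

definition tau :: real where "tau = (1 + sqrt 5) / 2"

definition mod_tau :: "real \<Rightarrow> real" where
  "mod_tau x = x - tau * of_int \<lfloor>x / tau\<rfloor>"

text \<open>x mod tau lies in the open positive arc from a mod tau to b mod tau on R / tau Z.\<close>
definition in_open_arc :: "real \<Rightarrow> real \<Rightarrow> real \<Rightarrow> bool" where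
  "in_open_arc x a b \<longleftrightarrow> 0 < mod_tau (x - a) \<and> mod_tau (x - a) < mod_tau (b - a)"

end

theory Submission
  imports Defs
begin

lemma sqrt5_bounds: "2 < sqrt (5::real)" "sqrt (5::real) < 3"
proof -
  have "sqrt (4::real) < sqrt 5" by (rule real_sqrt_less_mono) simp
  moreover have "sqrt (4::real) = 2" by (simp add: real_sqrt_unique)
  ultimately show "2 < sqrt (5::real)" by linarith
  have "sqrt (5::real) < sqrt 9" by (rule real_sqrt_less_mono) simp
  moreover have "sqrt (9::real) = 3" by (simp add: real_sqrt_unique)
  ultimately show "sqrt (5::real) < 3" by linarith
qed

lemma tau_gt1: "tau > 1" and tau_lt2: "tau < 2" and tau_sq: "tau^2 = tau + 1"
proof -
  show "tau > 1" using sqrt5_bounds unfolding tau_def by simp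
  show "tau < 2" using sqrt5_bounds unfolding tau_def by simp
  have s: "sqrt (5::real) ^ 2 = 5" by simp
  show "tau^2 = tau + 1" unfolding tau_def power2_eq_square
    using s by (simp add: power2_eq_square field_simps)
qed

lemma no_sq5_nat: "(x::nat)^2 = 5*y^2 \<Longrightarrow> y = 0"
proof (induction y arbitrary: x rule: less_induct)
  case (less y)
  show ?case
  proof (rule ccontr)
    assume y0: "y \<noteq> 0"
    have "(x mod 5)^2 mod 5 = x^2 mod 5" by (simp add: power_mod)
    also have "\<dots> = 0" using less.prems by simp
    finally have h: "(x mod 5)^2 mod 5 = 0" .
    have "x mod 5 < 5" by simp
    then have "x mod 5 = 0 \<or> x mod 5 = 1 \<or> x mod 5 = 2 \<or> x mod 5 = 3 \<or> x mod 5 = 4" by linarith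
    then have "x mod 5 = 0" using h by (auto simp: power2_eq_square)
    then obtain x' where x': "x = 5 * x'" by auto
    have "y^2 = 5 * x'^2" using less.prems x' by (simp add: power2_eq_square)
    moreover have "x' < y"
    proof (rule ccontr)
      assume "\<not> x' < y"
      then have "y \<le> x'" by simp
      then have "y^2 \<le> x'^2" by (simp add: power_mono)
      then show False using \<open>y^2 = 5 * x'^2\<close> y0 by simp
    qed
    ultimately have "x' = 0" using less.IH by blast
    then show False using \<open>y^2 = 5 * x'^2\<close> y0 by simp
  qed
qed

lemma no_sq5_int: "(x::int)^2 = 5*y^2 \<Longrightarrow> y = 0"
proof -
  assume h: "x^2 = 5*y^2"
  have "int ((nat \<bar>x\<bar>)^2) = int (5 * (nat \<bar>y\<bar>)^2)" using h by simp
  then have "(nat \<bar>x\<bar>)^2 = 5 * (nat \<bar>y\<bar>)^2" by (simp only: of_nat_eq_iff)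
  then have "nat \<bar>y\<bar> = 0" by (rule no_sq5_nat)
  then show "y = 0" by simp
qed

lemma norm_nz: "(d::int) \<noteq> 0 \<Longrightarrow> d^2 - d*q - q^2 \<noteq> 0"
proof
  assume d: "d \<noteq> 0" and h: "d^2 - d*q - q^2 = 0"
  have "(2*d-q)^2 = 5*q^2" using h by (simp add: power2_eq_square algebra_simps)
  then have "q = 0" by (rule no_sq5_int)
  then show False using h d by simp
qed

lemma mod_tau_bounds: "0 \<le> mod_tau x" "mod_tau x < tau"
proof -
  have tp: "tau > 0" using tau_gt1 by simp
  have a: "of_int \<lfloor>x / tau\<rfloor> \<le> x / tau" by simp
  have b: "x / tau < of_int \<lfloor>x / tau\<rfloor> + 1" by simp
  from a tp have "tau * of_int \<lfloor>x / tau\<rfloor> \<le> x" by (metis mult.commute pos_le_divide_eq)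
  then show "0 \<le> mod_tau x" unfolding mod_tau_def by simp
  from b tp have "x < tau * of_int \<lfloor>x / tau\<rfloor> + tau" by (simp add: field_simps)
  then show "mod_tau x < tau" unfolding mod_tau_def by simp
qed

lemma mod_tau_shift: "0 \<le> t \<Longrightarrow> t < tau \<Longrightarrow> mod_tau (of_int q * tau + t) = t"
proof -
  assume t0: "0 \<le> t" and t1: "t < tau"
  have tp: "tau > 0" using tau_gt1 by simp
  have "(of_int q * tau + t) / tau = of_int q + t / tau" using tp by (simp add: field_simps)
  moreover have "\<lfloor>of_int q + t / tau\<rfloor> = q"
    using t0 t1 tp by (intro floor_unique) (auto simp: field_simps)
  ultimately show ?thesis unfolding mod_tau_def by simp
qed

lemma mod_tau_lower:
  assumes d: "(d::int) \<noteq> 0"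
  shows "mod_tau (of_int d) \<ge> 1 / (7 * \<bar>of_int d\<bar>)"
proof -
  define q where "q = \<lfloor>of_int d / tau\<rfloor>"
  define r where "r = mod_tau (of_int d)"
  have r0: "0 \<le> r" and r1: "r < tau" unfolding r_def using mod_tau_bounds by auto
  have qr: "of_int q * tau = of_int d - r" unfolding r_def mod_tau_def q_def by simp
  have id: "real_of_int (d^2 - d*q - q^2) = r * (2 * of_int d - of_int q - r)"
  proof -
    have "real_of_int (d^2 - d*q - q^2) = (of_int d - of_int q * tau) * (of_int d - of_int q + of_int q * tau)"
      using tau_sq by (simp add: power2_eq_square) algebra
    also have "\<dots> = r * (2 * of_int d - of_int q - r)" using qr by simp
    finally show ?thesis .
  qed
  have N1: "1 \<le> \<bar>real_of_int (d^2 - d*q - q^2)\<bar>"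
    using norm_nz[OF d, of q] by linarith
  have dge: "1 \<le> \<bar>real_of_int d\<bar>" using d by linarith
  have "\<bar>of_int q * tau\<bar> = \<bar>of_int q\<bar> * tau" using tau_gt1 by (simp add: abs_mult)
  then have "\<bar>of_int q\<bar> * tau = \<bar>of_int d - r\<bar>" using qr by simp
  also have "\<dots> \<le> \<bar>of_int d\<bar> + 2" using r0 r1 tau_lt2 by linarith
  finally have "\<bar>real_of_int q\<bar> * tau \<le> \<bar>of_int d\<bar> + 2" .
  moreover have "\<bar>real_of_int q\<bar> \<le> \<bar>real_of_int q\<bar> * tau" using tau_gt1
    by (simp add: mult_le_cancel_left1)
  ultimately have qb: "\<bar>real_of_int q\<bar> \<le> \<bar>of_int d\<bar> + 2" by linarith
  have B: "\<bar>2 * of_int d - of_int q - r\<bar> \<le> 7 * \<bar>real_of_int d\<bar>"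
    using qb r0 r1 tau_lt2 dge by linarith
  have "1 \<le> r * \<bar>2 * of_int d - of_int q - r\<bar>" using N1 id r0 by (simp add: abs_mult)
  also have "\<dots> \<le> r * (7 * \<bar>real_of_int d\<bar>)" using B r0 by (rule mult_left_mono)
  finally have "1 \<le> r * (7 * \<bar>real_of_int d\<bar>)" .
  then show ?thesis unfolding r_def[symmetric] using dge by (simp add: field_simps)
qed

fun fibo :: "nat \<Rightarrow> int" where
  "fibo 0 = 0"
| "fibo (Suc 0) = 1"
| "fibo (Suc (Suc n)) = fibo (Suc n) + fibo n"

lemma fibo_id:
  "real_of_int (fibo (Suc m)) - real_of_int (fibo m) * tau = (1 - tau)^m \<and>
   real_of_int (fibo (Suc (Suc m))) - real_of_int (fibo (Suc m)) * tau = (1 - tau)^(Suc m)"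
proof (induction m)
  case 0
  then show ?case by simp
next
  case (Suc m)
  have psi: "(1 - tau)^2 = (1 - tau) + 1" using tau_sq by (simp add: power2_eq_square algebra_simps)
  have "real_of_int (fibo (Suc (Suc (Suc m)))) - real_of_int (fibo (Suc (Suc m))) * tau
      = (real_of_int (fibo (Suc (Suc m))) - real_of_int (fibo (Suc m)) * tau)
        + (real_of_int (fibo (Suc m)) - real_of_int (fibo m) * tau)"
    by (simp add: algebra_simps)
  also have "\<dots> = (1 - tau)^(Suc m) + (1 - tau)^m" using Suc.IH by simp
  also have "\<dots> = (1 - tau)^m * ((1 - tau) + 1)" by (simp add: algebra_simps)
  also have "\<dots> = (1 - tau)^m * (1 - tau)^2" using psi by simp
  also have "\<dots> = (1 - tau)^(Suc (Suc m))" by (simp add: power2_eq_square algebra_simps)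
  finally show ?case using Suc.IH by simp
qed

lemma fibo_bound:
  "0 \<le> fibo (Suc m) \<and> real_of_int (fibo (Suc m)) \<le> tau^m \<and>
   0 \<le> fibo (Suc (Suc m)) \<and> real_of_int (fibo (Suc (Suc m))) \<le> tau^(Suc m)"
proof (induction m)
  case 0
  then show ?case using tau_gt1 by simp
next
  case (Suc m)
  have "real_of_int (fibo (Suc (Suc (Suc m)))) = real_of_int (fibo (Suc (Suc m))) + real_of_int (fibo (Suc m))"
    by simp
  also have "\<dots> \<le> tau^(Suc m) + tau^m" using Suc.IH by linarith
  also have "\<dots> = tau^m * (tau + 1)" by (simp add: algebra_simps)
  also have "\<dots> = tau^(Suc (Suc m))" using tau_sq by (simp add: power2_eq_square)
  finally show ?case using Suc.IH by simp
qed

lemma psi_pow: "(-1::real)^m * (1 - tau)^m = 1 / tau^m"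
proof -
  have "tau * (tau - 1) = 1" using tau_sq by (simp add: power2_eq_square algebra_simps)
  then have e: "tau - 1 = 1 / tau" using tau_gt1 by (simp add: field_simps)
  have "(-1::real)^m * (1 - tau)^m = (tau - 1)^m"
    by (simp add: power_mult_distrib[symmetric])
  also have "\<dots> = 1 / tau^m" using e by (simp add: power_one_over)
  finally show ?thesis .
qed

theorem lemma15:
  shows "\<exists>C::real > 0. \<forall>n1 n2 :: int. n1 \<noteq> n2 \<longrightarrow>
           (\<exists>n3 :: int. in_open_arc (of_int n3) (of_int n1) (of_int n2) \<and>
                        real_of_int \<bar>n3\<bar> < C * real_of_int (max \<bar>n1\<bar> \<bar>n2\<bar>))"
proof (rule exI[of _ 30], intro conjI allI impI)
  show "(30::real) > 0" by simp
  fix n1 n2 :: int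
  assume ne: "n1 \<noteq> n2"
  define d where "d = n2 - n1"
  define M where "M = real_of_int (max \<bar>n1\<bar> \<bar>n2\<bar>)"
  define L where "L = mod_tau (of_int d)"
  have d0: "d \<noteq> 0" using ne unfolding d_def by simp
  have M1: "1 \<le> M" using ne unfolding M_def by linarith
  have dM: "\<bar>real_of_int d\<bar> \<le> 2 * M" unfolding d_def M_def by linarith
  have Llow: "L \<ge> 1 / (7 * \<bar>of_int d\<bar>)" unfolding L_def by (rule mod_tau_lower[OF d0])
  have dpos: "\<bar>real_of_int d\<bar> > 0" using d0 by simp
  have Lpos: "L > 0" using Llow dpos by (smt (verit) divide_pos_pos)
  have Linv: "1 / L \<le> 14 * M"
  proof -
    have "1 / L \<le> 7 * \<bar>of_int d\<bar>" using Llow Lpos dpos by (simp add: field_simps)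
    then show ?thesis using dM by linarith
  qed
  have Ltau: "L < tau" unfolding L_def by (rule mod_tau_bounds)
  obtain m1 where "1 / L < tau ^ m1" using real_arch_pow[OF tau_gt1] by blast
  define m0 where "m0 = (LEAST m. 1 / L < tau ^ m)"
  have m0a: "1 / L < tau ^ m0" unfolding m0_def by (rule LeastI) fact
  have m0b: "tau ^ m0 \<le> 14 * tau * M"
  proof (cases m0)
    case 0
    have "1 * 1 \<le> tau * M" using M1 tau_gt1 by (intro mult_mono) auto
    then show ?thesis using M1 tau_gt1 0 by simp
  next
    case (Suc j)
    have "\<not> 1 / L < tau ^ j"
    proof
      assume "1 / L < tau ^ j"
      then have "m0 \<le> j" unfolding m0_def by (rule Least_le)
      then show False using Suc by simp
    qed
    then have "tau ^ j \<le> 14 * M" using Linv by linarith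
    then have "tau * tau ^ j \<le> tau * (14 * M)" using tau_gt1 by simp
    then show ?thesis using Suc by (simp add: algebra_simps)
  qed
  define s :: int where "s = (-1)^m0"
  define k where "k = s * fibo (Suc m0)"
  define q where "q = s * fibo m0"
  define t where "t = 1 / tau ^ m0"
  have tpos: "t > 0" unfolding t_def using tau_gt1 by simp
  have tL: "t < L" unfolding t_def using m0a Lpos tau_gt1 by (simp add: field_simps)
  have kq: "real_of_int k = real_of_int q * tau + t"
  proof -
    have "real_of_int k - real_of_int q * tau
        = real_of_int s * (real_of_int (fibo (Suc m0)) - real_of_int (fibo m0) * tau)"
      unfolding k_def q_def by (simp add: algebra_simps)
    also have "\<dots> = (-1)^m0 * (1 - tau)^m0" using fibo_id[of m0] unfolding s_def by simp
    also have "\<dots> = t" unfolding t_def by (rule psi_pow)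
    finally show ?thesis by simp
  qed
  define n3 where "n3 = n1 + k"
  have "mod_tau (of_int n3 - of_int n1) = t"
    unfolding n3_def using kq mod_tau_shift[of t q] tpos tL Ltau by simp
  moreover have "mod_tau (of_int n2 - of_int n1) = L" unfolding L_def d_def by simp
  ultimately have arc: "in_open_arc (of_int n3) (of_int n1) (of_int n2)"
    unfolding in_open_arc_def using tpos tL by simp
  have "\<bar>real_of_int k\<bar> = real_of_int (fibo (Suc m0))"
    unfolding k_def s_def using fibo_bound[of m0] by (simp add: abs_mult)
  also have "\<dots> \<le> tau ^ m0" using fibo_bound[of m0] by simp
  finally have kb: "\<bar>real_of_int k\<bar> \<le> 14 * tau * M" using m0b by linarith
  have "14 * tau * M \<le> 28 * M" using tau_lt2 M1 by simp
  then have "real_of_int \<bar>n3\<bar> < 30 * M" unfolding n3_def using kb M1 unfolding M_def by linarith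
  then show "\<exists>n3 :: int. in_open_arc (of_int n3) (of_int n1) (of_int n2) \<and>
                        real_of_int \<bar>n3\<bar> < 30 * real_of_int (max \<bar>n1\<bar> \<bar>n2\<bar>)"
    using arc unfolding M_def by blast
qed

end
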